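(* Consider the adaptive experiment and the ADL-TMLE $\psi(Q_n^* )$ described in the context. Let $\bar g_\infty\in\mathcal G$ be any fixed treatment randomization function and let $Q_\infty=(Q_{\infty,W},Q_{\infty,Y})\in\mathcal Q$ be any fixed element with $Q_{\infty,W}=Q_{0,W}$ and $Q_{\infty,Y}\in\mathcal Q_Y$ (with outcome conditional mean function $\bar Q_\infty$). Then \[ \psi(Q_n^* )-\psi(Q_0)=M_{1,n}(Q_\infty,\bar g_\infty)+M_{2,n}(Q_n^*,Q_\infty,\bar g_n)+M_{3,n}(Q_\infty,\bar g_n,\bar g_\infty), \] where \[ M_{1,n}(Q_\infty,\bar g_\infty):=\frac1n\sum_{i=1}^n\big[D(Q_\infty,\bar g_\infty)(O_i)-P_{Q_0,g_i}D(Q_\infty,\bar g_\infty)\big], \] \[ M_{2,n}(Q_n^*,Q_\infty,\bar g_n):=\frac1n\sum_{i=1}^n\Big\{\big[D(Q_n^*,\bar g_n)(O_i)-P_{Q_0,g_i}D(Q_n^*,\bar g_n)\big]-\big[D(Q_\infty,\bar g_n)(O_i)-P_{Q_0,g_i}D(Q_\infty,\bar g_n)\big]\Big\}, \] \[ M_{3,n}(Q_\infty,\bar g_n,\bar g_\infty):=\frac1n\sum_{i=1}^n\Big\{\big[D(Q_\infty,\bar g_n)(O_i)-P_{Q_0,g_i}D(Q_\infty,\bar g_n)\big]-\big[D(Q_\infty,\bar g_\infty)(O_i)-P_{Q_0,g_i}D(Q_\infty,\bar g_\infty)\big]\Big\}. \]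
   Context: Setting: $\mathcal W$ is a covariate space, $\mathcal A=\{0,1\}$, $\mathcal Y=[0,1]$. $\mathcal Q_W$ is a set of distributions on $\mathcal W$, $\mathcal Q_Y$ a set of conditional distributions of $Y\in\mathcal Y$ given $(A,W)$, and $\mathcal Q=\mathcal Q_W\otimes\mathcal Q_Y$. For $Q=(Q_W,Q_Y)\in\mathcal Q$, $\bar Q(a,w)$ denotes the conditional mean of $Y$ given $A=a,W=w$ under $Q_Y$, and $\psi(Q):=\int[\bar Q(1,w)-\bar Q(0,w)]\,dQ_W(w)$. $\mathcal G$ is a class of treatment randomization functions $g:\mathcal W\times\mathcal A\to[0,1]$, $g(a|w)$ being the probability of $A=a$ given $W=w$. An adaptive experiment enrolls $n$ units sequentially; unit $i$ has data $O_i=(W_i,A_i,Y_i)$, and $\bar O(i)=(O_1,\dots,O_i)$. With true $Q_0=(Q_{0,W},Q_{0,Y})\in\mathcal Q$: $W_i\sim Q_{0,W}$, then $A_i\sim g_i(\cdot|W_i)$ where $g_i\in\mathcal G$ is a known function determined by $\bar O(i-1)$, then $Y_i\sim Q_{0,Y}(\cdot|A_i,W_i)$; i.e. the joint density is $\prod_{i=1}^n q_{0,w}(w_i)g_i(a_i|w_i)q_{0,y}(y_i|a_i,w_i)$. The average design is $\bar g_n:=\frac1n\sum_{i=1}^n g_i$. For $Q\in\mathcal Q$, $g\in\mathcal G$, $P_{Q,g}$ is the law of $(W,A,Y)$ with $W\sim Q_W$, $A|W\sim g(\cdot|W)$, $Y|A,W\sim Q_Y(\cdot|A,W)$, and $P_{Q,g}f=\int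 f\,dP_{Q,g}$ (any data-dependent quantities inside $f$ being held fixed in the integral). For $Q\in\mathcal Q$, $g\in\mathcal G$, define $D(Q,g)(w,a,y)=D_1(\bar Q,g)(w,a,y)+D_2(Q)(w)$ with $D_1(\bar Q,g)(w,a,y)=\frac{2a-1}{g(a|w)}(y-\bar Q(a,w))$ and $D_2(Q)(w)=\bar Q(1,w)-\bar Q(0,w)-\psi(Q)$. ADL-TMLE: given an initial estimate $\bar Q_n$ of $\bar Q_0$, let $H_n(a,w)=(2a-1)/\bar g_n(a|w)$, $\mathrm{logit}\,\bar Q_{n,\epsilon}=\mathrm{logit}\,\bar Q_n+\epsilon H_n$, and $\bar Q_n^*=\bar Q_{n,\epsilon_n}$ with $\epsilon_n$ such that $\frac1n\sum_{i=1}^n\frac{2A_i-1}{\bar g_n(A_i|W_i)}[Y_i-\bar Q_n^*(A_i,W_i)]=0$. Then $Q_n^*=(Q_{n,W},Q_{n,Y}^* )$ where $Q_{n,W}$ is the empirical distribution of $W_1,\dots,W_n$ and $Q^*_{n,Y}$ is an outcome distribution with conditional mean $\bar Q_n^*$, so $\psi(Q_n^* )=\frac1n\sum_{i=1}^n[\bar Q_n^*(1,W_i)-\bar Q_n^*(0,W_i)]$. *)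

theory Defs
  imports "HOL-Probability.Probability"
begin

(* Treatment space A = {0,1} encoded as nat; covariate space is a measurable space MW;
   outcome space is [0,1] inside the reals. *)

definition valid_g :: "'w measure \<Rightarrow> (nat \<Rightarrow> 'w \<Rightarrow> real) \<Rightarrow> bool" where
  "valid_g MW g \<longleftrightarrow>
     (\<forall>a\<in>{0,1}. \<forall>w\<in>space MW. g a w \<in> {0..1}) \<and>
     (\<forall>w\<in>space MW. g 0 w + g 1 w = 1) \<and>
     (\<forall>a\<in>{0,1}. g a \<in> borel_measurable MW)"

(* Q_Y: conditional distribution of Y given (A,W): a probability kernel with values in [0,1] *)
definition valid_QY :: "'w measure \<Rightarrow> (nat \<Rightarrow> 'w \<Rightarrow> real measure) \<Rightarrow> bool" where
  "valid_QY MW QY \<longleftrightarrow>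
     (\<forall>a\<in>{0,1}. QY a \<in> MW \<rightarrow>\<^sub>M prob_algebra borel \<and>
                 (\<forall>w\<in>space MW. AE y in QY a w. y \<in> {0..1}))"

definition Qbar :: "(nat \<Rightarrow> 'w \<Rightarrow> real measure) \<Rightarrow> nat \<Rightarrow> 'w \<Rightarrow> real" where
  "Qbar QY a w = (\<integral>y. y \<partial>(QY a w))"

definition psi :: "'w measure \<Rightarrow> (nat \<Rightarrow> 'w \<Rightarrow> real measure) \<Rightarrow> real" where
  "psi QW QY = (\<integral>w. Qbar QY 1 w - Qbar QY 0 w \<partial>QW)"

definition D1 :: "(nat \<Rightarrow> 'w \<Rightarrow> real measure) \<Rightarrow> (nat \<Rightarrow> 'w \<Rightarrow> real) \<Rightarrow> 'w \<times> nat \<times> real \<Rightarrow> real" where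
  "D1 QY g = (\<lambda>(w,a,y). (2 * real a - 1) / g a w * (y - Qbar QY a w))"

definition D2 :: "'w measure \<Rightarrow> (nat \<Rightarrow> 'w \<Rightarrow> real measure) \<Rightarrow> 'w \<Rightarrow> real" where
  "D2 QW QY = (\<lambda>w. Qbar QY 1 w - Qbar QY 0 w - psi QW QY)"

definition D :: "'w measure \<Rightarrow> (nat \<Rightarrow> 'w \<Rightarrow> real measure) \<Rightarrow> (nat \<Rightarrow> 'w \<Rightarrow> real)
                 \<Rightarrow> 'w \<times> nat \<times> real \<Rightarrow> real" where
  "D QW QY g = (\<lambda>(w,a,y). D1 QY g (w,a,y) + D2 QW QY w)"

(* P_{Q,g} f: expectation of f(W,A,Y) under W ~ QW, A|W ~ g(.|W), Y|A,W ~ QY(.|A,W),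
   written out as the iterated integral of this law *)
definition Pexp :: "'w measure \<Rightarrow> (nat \<Rightarrow> 'w \<Rightarrow> real measure) \<Rightarrow> (nat \<Rightarrow> 'w \<Rightarrow> real)
                    \<Rightarrow> ('w \<times> nat \<times> real \<Rightarrow> real) \<Rightarrow> real" where
  "Pexp QW QY g f = (\<integral>w. (\<Sum>a\<in>{0,1::nat}. g a w * (\<integral>y. f (w,a,y) \<partial>(QY a w))) \<partial>QW)"

definition gbar :: "nat \<Rightarrow> (nat \<Rightarrow> nat \<Rightarrow> 'w \<Rightarrow> real) \<Rightarrow> nat \<Rightarrow> 'w \<Rightarrow> real" where
  "gbar n g = (\<lambda>a w. (1 / real n) * (\<Sum>i=1..n. g i a w))"

definition empW :: "'w measure \<Rightarrow> nat \<Rightarrow> (nat \<Rightarrow> 'w) \<Rightarrow> 'w measure" where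
  "empW MW n W = distr (uniform_count_measure {1..n}) MW W"

definition logit :: "real \<Rightarrow> real" where "logit p = ln (p / (1 - p))"
definition expit :: "real \<Rightarrow> real" where "expit x = exp x / (1 + exp x)"

definition Hn :: "nat \<Rightarrow> (nat \<Rightarrow> nat \<Rightarrow> 'w \<Rightarrow> real) \<Rightarrow> nat \<Rightarrow> 'w \<Rightarrow> real" where
  "Hn n g a w = (2 * real a - 1) / gbar n g a w"

definition Qfluct :: "(nat \<Rightarrow> 'w \<Rightarrow> real) \<Rightarrow> nat \<Rightarrow> (nat \<Rightarrow> nat \<Rightarrow> 'w \<Rightarrow> real) \<Rightarrow> real
                      \<Rightarrow> nat \<Rightarrow> 'w \<Rightarrow> real" where
  "Qfluct Qn n g eps a w = expit (logit (Qn a w) + eps * Hn n g a w)"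

end

theory Submission
  imports Defs
begin

lemma QY_facts:
  assumes "valid_QY MW QY" "a \<in> {0,1}" "w \<in> space MW"
  shows "prob_space (QY a w)" "sets (QY a w) = sets borel" "integrable (QY a w) (\<lambda>y. y)"
    "0 \<le> Qbar QY a w" "Qbar QY a w \<le> 1" "AE y in QY a w. y \<in> {0..1}"
proof -
  have K: "QY a \<in> MW \<rightarrow>\<^sub>M prob_algebra borel" and ae: "AE y in QY a w. y \<in> {0..1}"
    using assms unfolding valid_QY_def by auto
  have "QY a w \<in> space (prob_algebra borel)" using K assms(3) by (rule measurable_space)
  then show ps: "prob_space (QY a w)" and ss: "sets (QY a w) = sets borel"
    by (auto simp: space_prob_algebra)
  show "AE y in QY a w. y \<in> {0..1}" by fact
  interpret prob_space "QY a w" by (rule ps)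
  show int: "integrable (QY a w) (\<lambda>y. y)"
    by (rule integrable_const_bound[where B=1]) (use ae in \<open>auto simp: measurable_cong_sets[OF ss refl]\<close>)
  show "0 \<le> Qbar QY a w" unfolding Qbar_def
    by (rule integral_nonneg_AE) (use ae in auto)
  have "Qbar QY a w \<le> (\<integral>y. 1 \<partial>(QY a w))" unfolding Qbar_def
    by (rule integral_mono_AE) (use ae int in auto)
  then show "Qbar QY a w \<le> 1" by (simp add: prob_space)
qed

lemma Qbar_meas:
  assumes "valid_QY MW QY" "a \<in> {0,1}"
  shows "Qbar QY a \<in> borel_measurable MW"
proof -
  have K: "QY a \<in> MW \<rightarrow>\<^sub>M subprob_algebra borel"
    using assms unfolding valid_QY_def by (auto intro: measurable_prob_algebraD)
  have "(\<lambda>M. integral\<^sup>L M (\<lambda>y::real. y)) \<in> subprob_algebra borel \<rightarrow>\<^sub>M borel"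
    by (rule integral_measurable_subprob_algebra) simp
  from measurable_compose[OF K this] show ?thesis unfolding Qbar_def[abs_def] by (simp add: o_def)
qed

lemma psi_emp:
  assumes "n \<ge> 1" "\<forall>i\<in>{1..n}. Wd i \<in> space MW" "f \<in> borel_measurable MW"
  shows "(\<integral>w. f w \<partial>(empW MW n Wd)) = (1 / real n) * (\<Sum>i=1..n. f (Wd i))"
proof -
  have m: "Wd \<in> uniform_count_measure {1..n} \<rightarrow>\<^sub>M MW"
    using assms(2) by (auto simp: measurable_def space_uniform_count_measure sets_uniform_count_measure)
  show ?thesis unfolding empW_def
    by (subst integral_distr[OF m assms(3)]) (simp add: integral_uniform_count_measure)
qed

lemma tele:
  fixes a b c d e f :: "nat \<Rightarrow> real"
  shows "(1/r)*(\<Sum>i\<in>A. a i - b i) + (1/r)*(\<Sum>i\<in>A. (c i - d i) - (e i - f i))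
    + (1/r)*(\<Sum>i\<in>A. (e i - f i) - (a i - b i)) = (1/r)*(\<Sum>i\<in>A. c i - d i)"
  by (simp add: sum_subtractf sum.distrib algebra_simps)

lemma int_affine:
  fixes k m d :: real and M :: "real measure"
  assumes "prob_space M" "integrable M (\<lambda>y. y)"
  shows "(\<integral>y. k*(y-m)+d \<partial>M) = k*((\<integral>y. y \<partial>M) - m) + d"
proof -
  interpret prob_space M by fact
  have "(\<lambda>y. k*(y-m)+d) = (\<lambda>y. k*y + (d - k*m))" by (rule ext) (simp add: ring_distribs)
  then have "(\<integral>y. k*(y-m)+d \<partial>M) = (\<integral>y. k*y + (d - k*m) \<partial>M)" by simp
  also have "\<dots> = (\<integral>y. k*y \<partial>M) + (\<integral>y. (d - k*m) \<partial>M)"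
    using assms(2) by (subst Bochner_Integration.integral_add) auto
  also have "\<dots> = k*((\<integral>y. y \<partial>M) - m) + d" by (simp add: prob_space algebra_simps)
  finally show ?thesis .
qed

lemma term_bound:
  fixes g G k x d N D0 :: real
  assumes "0 \<le> g" "g \<le> N*G" "0 < G" "g \<le> 1" "\<bar>x\<bar> \<le> 1" "\<bar>d\<bar> \<le> D0" "\<bar>k\<bar> \<le> 1"
  shows "\<bar>g*(k/G*x + d)\<bar> \<le> N + D0"
proof -
  have "g/G \<le> N" using assms(2,3) by (simp add: divide_le_eq)
  have "\<bar>g*(k/G*x)\<bar> = (g/G)*(\<bar>k\<bar>*\<bar>x\<bar>)" using assms(1,3) by (simp add: abs_mult)
  also have "\<dots> \<le> (g/G)*1" 
    by (rule mult_left_mono) (use assms in \<open>auto intro: mult_le_one\<close>)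
  also have "\<dots> \<le> N" using \<open>g/G \<le> N\<close> by simp
  finally have 1: "\<bar>g*(k/G*x)\<bar> \<le> N" .
  have "\<bar>g*d\<bar> \<le> 1*D0" unfolding abs_mult using assms
    by (intro mult_mono) auto
  then have 2: "\<bar>g*d\<bar> \<le> D0" by simp
  have "\<bar>g*(k/G*x + d)\<bar> \<le> \<bar>g*(k/G*x)\<bar> + \<bar>g*d\<bar>" unfolding distrib_left by (rule abs_triangle_ineq)
  then show ?thesis using 1 2 by linarith
qed

theorem theorem2:
  fixes MW :: "'w measure"
    and Q0W :: "'w measure"
    and Q0Y QinfY QnY :: "nat \<Rightarrow> 'w \<Rightarrow> real measure"
    and g :: "nat \<Rightarrow> nat \<Rightarrow> 'w \<Rightarrow> real"
    and ginf :: "nat \<Rightarrow> 'w \<Rightarrow> real"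
    and Wd :: "nat \<Rightarrow> 'w" and Ad :: "nat \<Rightarrow> nat" and Yd :: "nat \<Rightarrow> real"
    and Qn :: "nat \<Rightarrow> 'w \<Rightarrow> real" and eps :: real and n :: nat
  assumes n_pos: "n \<ge> 1"
    and Q0W: "prob_space Q0W" "sets Q0W = sets MW"
    and Q0Y: "valid_QY MW Q0Y"
    and Qinf: "valid_QY MW QinfY"
    and ginf: "valid_g MW ginf"
    and g: "\<forall>i\<in>{1..n}. valid_g MW (g i)"
    and data: "\<forall>i\<in>{1..n}. Wd i \<in> space MW \<and> Ad i \<in> {0,1} \<and> Yd i \<in> {0..1}"
    and pos: "\<forall>a\<in>{0,1}. \<forall>w\<in>space MW. gbar n g a w > 0"
    and Qn: "\<forall>a\<in>{0,1}. \<forall>w\<in>space MW. Qn a w \<in> {0<..<1}"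
    and eps: "(1 / real n) * (\<Sum>i=1..n. (2 * real (Ad i) - 1) / gbar n g (Ad i) (Wd i)
                 * (Yd i - Qfluct Qn n g eps (Ad i) (Wd i))) = 0"
    and QnY: "valid_QY MW QnY"
    and QnY_mean: "\<forall>a\<in>{0,1}. \<forall>w\<in>space MW. Qbar QnY a w = Qfluct Qn n g eps a w"
  shows
    "psi (empW MW n Wd) QnY - psi Q0W Q0Y =
       (1 / real n) * (\<Sum>i=1..n.
          D Q0W QinfY ginf (Wd i, Ad i, Yd i) - Pexp Q0W Q0Y (g i) (D Q0W QinfY ginf))
     + (1 / real n) * (\<Sum>i=1..n.
          (D (empW MW n Wd) QnY (gbar n g) (Wd i, Ad i, Yd i)
             - Pexp Q0W Q0Y (g i) (D (empW MW n Wd) QnY (gbar n g)))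
        - (D Q0W QinfY (gbar n g) (Wd i, Ad i, Yd i)
             - Pexp Q0W Q0Y (g i) (D Q0W QinfY (gbar n g))))
     + (1 / real n) * (\<Sum>i=1..n.
          (D Q0W QinfY (gbar n g) (Wd i, Ad i, Yd i)
             - Pexp Q0W Q0Y (g i) (D Q0W QinfY (gbar n g)))
        - (D Q0W QinfY ginf (Wd i, Ad i, Yd i)
             - Pexp Q0W Q0Y (g i) (D Q0W QinfY ginf)))"
proof -
  let ?E = "empW MW n Wd"
  let ?G = "gbar n g"
  let ?c = "psi (empW MW n Wd) QnY"
  let ?d = "\<lambda>w. Qbar QnY 1 w - Qbar QnY 0 w - ?c"
  have np: "real n > 0" using n_pos by simp
  have sp: "space Q0W = space MW" using Q0W(2) by (rule sets_eq_imp_space_eq)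
  interpret P0: prob_space Q0W by (rule Q0W(1))
  have bm: "borel_measurable Q0W = borel_measurable MW" by (rule measurable_cong_sets[OF Q0W(2) refl])
  have gv: "\<And>i a w. i \<in> {1..n} \<Longrightarrow> a \<in> {0,1} \<Longrightarrow> w \<in> space MW \<Longrightarrow> 0 \<le> g i a w \<and> g i a w \<le> 1"
    using g unfolding valid_g_def by auto
  have gm: "\<And>i a. i \<in> {1..n} \<Longrightarrow> a \<in> {0,1} \<Longrightarrow> g i a \<in> borel_measurable MW"
    using g unfolding valid_g_def by auto
  have gsum: "\<And>i w. i \<in> {1..n} \<Longrightarrow> w \<in> space MW \<Longrightarrow> g i 0 w + g i 1 w = 1"
    using g unfolding valid_g_def by auto
  have Gsum_eq: "\<And>(a::nat) w. (\<Sum>i=1..n. g i a w) = real n * ?G a w"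
    using np by (simp add: gbar_def)
  have G1: "\<And>w. w \<in> space MW \<Longrightarrow> ?G 0 w + ?G 1 w = 1"
  proof -
    fix w assume w: "w \<in> space MW"
    have "(\<Sum>i=1..n. g i 0 w) + (\<Sum>i=1..n. g i 1 w) = (\<Sum>i=1..n. (1::real))"
      unfolding sum.distrib[symmetric] by (rule sum.cong) (use gsum w in auto)
    then show "?G 0 w + ?G 1 w = 1" using np by (simp add: gbar_def field_simps)
  qed
  have Gle: "\<And>i a w. i \<in> {1..n} \<Longrightarrow> a \<in> {0,1} \<Longrightarrow> w \<in> space MW \<Longrightarrow> g i a w \<le> real n * ?G a w"
  proof -
    fix i and a :: nat and w assume h: "i \<in> {1..n}" "a \<in> {0,1}" "w \<in> space MW"
    have "g i a w \<le> (\<Sum>j=1..n. g j a w)"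
      by (rule member_le_sum) (use h gv in auto)
    then show "g i a w \<le> real n * ?G a w" using Gsum_eq by simp
  qed
  have Gm: "\<And>a. a \<in> {0,1} \<Longrightarrow> ?G a \<in> borel_measurable MW"
  proof -
    fix a :: nat assume a: "a \<in> {0,1}"
    have "(\<lambda>w. \<Sum>i=1..n. g i a w) \<in> borel_measurable MW"
      by (rule borel_measurable_sum) (use gm a in auto)
    then show "?G a \<in> borel_measurable MW" unfolding gbar_def by simp
  qed
  have q0m: "\<And>a. a \<in> {0,1} \<Longrightarrow> Qbar Q0Y a \<in> borel_measurable MW" using Q0Y by (rule Qbar_meas)
  have qnm: "\<And>a. a \<in> {0,1} \<Longrightarrow> Qbar QnY a \<in> borel_measurable MW" using QnY by (rule Qbar_meas)
  note QY0 = QY_facts[OF Q0Y] and QYn = QY_facts[OF QnY]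

  have step1: "?thesis \<longleftrightarrow> psi ?E QnY - psi Q0W Q0Y =
     (1 / real n) * (\<Sum>i=1..n. D ?E QnY ?G (Wd i, Ad i, Yd i) - Pexp Q0W Q0Y (g i) (D ?E QnY ?G))"
    by (simp only: tele)

  have Dpt: "\<And>i. i \<in> {1..n} \<Longrightarrow> D ?E QnY ?G (Wd i, Ad i, Yd i) =
      (2 * real (Ad i) - 1) / ?G (Ad i) (Wd i) * (Yd i - Qfluct Qn n g eps (Ad i) (Wd i)) + ?d (Wd i)"
  proof -
    fix i assume i: "i \<in> {1..n}"
    then have h: "Ad i \<in> {0,1}" "Wd i \<in> space MW" using data by auto
    then have "Qbar QnY (Ad i) (Wd i) = Qfluct Qn n g eps (Ad i) (Wd i)" using QnY_mean by blast
    then show "?thesis i" by (simp add: D_def D1_def D2_def)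
  qed
  have cE: "?c = (1 / real n) * (\<Sum>i=1..n. Qbar QnY 1 (Wd i) - Qbar QnY 0 (Wd i))"
    unfolding psi_def
    by (rule psi_emp) (use n_pos data qnm in auto)
  have eps0: "(\<Sum>i=1..n. (2 * real (Ad i) - 1) / ?G (Ad i) (Wd i)
                 * (Yd i - Qfluct Qn n g eps (Ad i) (Wd i))) = 0"
    using eps np by simp
  have step2: "(\<Sum>i=1..n. D ?E QnY ?G (Wd i, Ad i, Yd i)) = 0"
  proof -
    have "(\<Sum>i=1..n. D ?E QnY ?G (Wd i, Ad i, Yd i)) =
      (\<Sum>i=1..n. (2 * real (Ad i) - 1) / ?G (Ad i) (Wd i) * (Yd i - Qfluct Qn n g eps (Ad i) (Wd i)))
      + ((\<Sum>i=1..n. Qbar QnY 1 (Wd i) - Qbar QnY 0 (Wd i)) - real n * ?c)"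
      by (simp add: Dpt sum.distrib sum_subtractf)
    also have "\<dots> = 0" using eps0 cE np by simp
    finally show ?thesis .
  qed

  define F where "F i w = g i 1 w * (1 / ?G 1 w * (Qbar Q0Y 1 w - Qbar QnY 1 w) + ?d w)
      + g i 0 w * ((-1) / ?G 0 w * (Qbar Q0Y 0 w - Qbar QnY 0 w) + ?d w)" for i w
  have inner: "\<And>a w. a \<in> {0,1} \<Longrightarrow> w \<in> space MW \<Longrightarrow>
      (\<integral>y. D ?E QnY ?G (w,a,y) \<partial>(Q0Y a w)) = (2 * real a - 1) / ?G a w * (Qbar Q0Y a w - Qbar QnY a w) + ?d w"
  proof -
    fix a :: nat and w assume h: "a \<in> {0,1}" "w \<in> space MW"
    have "(\<lambda>y. D ?E QnY ?G (w,a,y)) = (\<lambda>y. (2 * real a - 1) / ?G a w * (y - Qbar QnY a w) + ?d w)"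
      by (rule ext) (simp add: D_def D1_def D2_def)
    note e = this
    show "?thesis a w" unfolding e int_affine[OF QY0(1)[OF h] QY0(3)[OF h]]
      Qbar_def[of Q0Y a w, symmetric] by (rule refl)
  qed
  have Pexp_eq: "\<And>i. i \<in> {1..n} \<Longrightarrow> Pexp Q0W Q0Y (g i) (D ?E QnY ?G) = (\<integral>w. F i w \<partial>Q0W)"
  proof -
    fix i assume i: "i \<in> {1..n}"
    have "\<And>w. w \<in> space Q0W \<Longrightarrow> (\<Sum>a\<in>{0,1::nat}. g i a w * (\<integral>y. D ?E QnY ?G (w,a,y) \<partial>(Q0Y a w))) = F i w"
    proof -
      fix w assume "w \<in> space Q0W"
      then have w: "w \<in> space MW" using sp by simp
      show "?thesis w" using inner[of 0 w] inner[of 1 w] w unfolding F_def by simp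
    qed
    then show "?thesis i" unfolding Pexp_def
      by (rule Bochner_Integration.integral_cong[OF refl])
  qed
  have cb: "\<And>w. w \<in> space MW \<Longrightarrow> \<bar>?d w\<bar> \<le> 1 + \<bar>?c\<bar>"
  proof -
    fix w assume w: "w \<in> space MW"
    have "0 \<le> Qbar QnY 1 w" "Qbar QnY 1 w \<le> 1" "0 \<le> Qbar QnY 0 w" "Qbar QnY 0 w \<le> 1"
      using QYn(4,5)[OF _ w] by auto
    then show "\<bar>?d w\<bar> \<le> 1 + \<bar>?c\<bar>" by linarith
  qed
  have xb: "\<And>a w. a \<in> {0,1} \<Longrightarrow> w \<in> space MW \<Longrightarrow> \<bar>Qbar Q0Y a w - Qbar QnY a w\<bar> \<le> 1"
  proof -
    fix a :: nat and w assume h: "a \<in> {0,1}" "w \<in> space MW"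
    show "\<bar>Qbar Q0Y a w - Qbar QnY a w\<bar> \<le> 1" using QY0(4,5)[OF h] QYn(4,5)[OF h] by linarith
  qed
  have Fint: "\<And>i. i \<in> {1..n} \<Longrightarrow> integrable Q0W (F i)"
  proof -
    fix i assume i: "i \<in> {1..n}"
    have [measurable]: "g i 0 \<in> borel_measurable MW" "g i 1 \<in> borel_measurable MW"
      "?G 0 \<in> borel_measurable MW" "?G 1 \<in> borel_measurable MW"
      "Qbar Q0Y 0 \<in> borel_measurable MW" "Qbar Q0Y 1 \<in> borel_measurable MW"
      "Qbar QnY 0 \<in> borel_measurable MW" "Qbar QnY 1 \<in> borel_measurable MW"
      using gm[OF i] Gm q0m qnm by auto
    have "F i \<in> borel_measurable MW" unfolding F_def by measurable
    then have m: "F i \<in> borel_measurable Q0W" by (subst bm)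
    show "integrable Q0W (F i)"
    proof (rule P0.integrable_const_bound[OF _ m, where B = "2 * (real n + (1 + \<bar>?c\<bar>))"])
      show "AE w in Q0W. norm (F i w) \<le> 2 * (real n + (1 + \<bar>?c\<bar>))"
      proof (rule AE_I2)
        fix w assume "w \<in> space Q0W"
        then have w: "w \<in> space MW" using sp by simp
        have b1: "\<bar>g i 1 w * (1 / ?G 1 w * (Qbar Q0Y 1 w - Qbar QnY 1 w) + ?d w)\<bar> \<le> real n + (1 + \<bar>?c\<bar>)"
          by (rule term_bound) (use gv[OF i _ w] Gle[OF i _ w] pos w xb[OF _ w] cb[OF w] in auto)
        have b0: "\<bar>g i 0 w * ((-1) / ?G 0 w * (Qbar Q0Y 0 w - Qbar QnY 0 w) + ?d w)\<bar> \<le> real n + (1 + \<bar>?c\<bar>)"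
          by (rule term_bound) (use gv[OF i _ w] Gle[OF i _ w] pos w xb[OF _ w] cb[OF w] in auto)
        show "norm (F i w) \<le> 2 * (real n + (1 + \<bar>?c\<bar>))"
          unfolding F_def real_norm_def by (rule order_trans[OF abs_triangle_ineq]) (rule order_trans[OF add_mono[OF b1 b0]], simp)
      qed
    qed
  qed
  have Fsum: "\<And>w. w \<in> space MW \<Longrightarrow> (\<Sum>i=1..n. F i w) = real n * (Qbar Q0Y 1 w - Qbar Q0Y 0 w - ?c)"
  proof -
    fix w assume w: "w \<in> space MW"
    have p0: "?G 0 w > 0" and p1: "?G 1 w > 0" using pos w by auto
    have "(\<Sum>i=1..n. F i w) = (\<Sum>i=1..n. g i 1 w) * (1 / ?G 1 w * (Qbar Q0Y 1 w - Qbar QnY 1 w) + ?d w)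
      + (\<Sum>i=1..n. g i 0 w) * ((-1) / ?G 0 w * (Qbar Q0Y 0 w - Qbar QnY 0 w) + ?d w)"
      unfolding F_def sum.distrib sum_distrib_right ..
    also have "\<dots> = real n * ((Qbar Q0Y 1 w - Qbar QnY 1 w) - (Qbar Q0Y 0 w - Qbar QnY 0 w)
        + (?G 0 w + ?G 1 w) * ?d w)"
      unfolding Gsum_eq using p0 p1 by (simp add: field_simps)
    also have "\<dots> = real n * (Qbar Q0Y 1 w - Qbar Q0Y 0 w - ?c)"
      using G1[OF w] by simp
    finally show "?thesis w" .
  qed
  have q0int: "\<And>a. a \<in> {0,1} \<Longrightarrow> integrable Q0W (Qbar Q0Y a)"
  proof -
    fix a :: nat assume a: "a \<in> {0,1}"
    show "integrable Q0W (Qbar Q0Y a)"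
      by (rule P0.integrable_const_bound[where B=1])
        (use q0m[OF a] bm QY0(4,5)[OF a] sp in auto)
  qed
  have step3: "(\<Sum>i=1..n. Pexp Q0W Q0Y (g i) (D ?E QnY ?G)) = real n * (psi Q0W Q0Y - ?c)"
  proof -
    have "(\<Sum>i=1..n. Pexp Q0W Q0Y (g i) (D ?E QnY ?G)) = (\<Sum>i=1..n. \<integral>w. F i w \<partial>Q0W)"
      by (rule sum.cong) (auto simp: Pexp_eq)
    also have "\<dots> = (\<integral>w. (\<Sum>i=1..n. F i w) \<partial>Q0W)"
      by (rule Bochner_Integration.integral_sum[symmetric]) (use Fint in auto)
    also have "\<dots> = (\<integral>w. real n * (Qbar Q0Y 1 w - Qbar Q0Y 0 w - ?c) \<partial>Q0W)"
      by (rule Bochner_Integration.integral_cong[OF refl]) (metis sp Fsum)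
    also have "\<dots> = real n * ((\<integral>w. Qbar Q0Y 1 w \<partial>Q0W) - (\<integral>w. Qbar Q0Y 0 w \<partial>Q0W) - ?c)"
      using q0int[of 0] q0int[of 1] by (simp add: P0.prob_space)
    also have "\<dots> = real n * (psi Q0W Q0Y - ?c)"
      unfolding psi_def using q0int[of 0] q0int[of 1] by simp
    finally show ?thesis .
  qed
  show ?thesis unfolding step1
    using step2 step3 np by (simp add: sum_subtractf field_simps)
qed

end
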